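(* For any policy in the class $\Pi$ (with parameters $T,\boldsymbol\gamma,L,Y$), if $$n\lambda<\min_{\eta\in\mathcal S_n}\ \min_{m\in[n]}\ \frac{\sum_{l=1}^m\mu_{\eta(l)}}{\sum_{l=1}^m f_{l,\eta}},$$ (equivalently, $n\lambda\sum_{l=1}^m f_{l,\eta}<\sum_{l=1}^m\mu_{\eta(l)}$ for all $\eta\in\mathcal S_n$, $m\in[n]$), then the Markov chain $\{\mathbf X(t)\}_{t\ge0}$ is positive recurrent.
   Context: Model. Fix $n\ge1$, $[n]=\{1,\dots,n\}$, $\mathcal S_n$ the set of permutations of $[n]$, $e_1,\dots,e_n$ the standard basis of $\mathbb R^n$. Time is discrete, $t=0,1,2,\dots$. There are $n$ single-server FIFO queues with infinite buffers; $\mathbf Q(t)\in\mathbb Z_{\ge0}^n$ is the queue-length vector at the start of slot $t$. Arrivals $A(t)\in\mathbb Z_{\ge0}$ are i.i.d. over $t$ with $E[A(1)]=n\lambda$, $\mathrm{Var}(A(1))=n\sigma_\lambda^2$, $A(1)\le nA_{\max}$ a.s. Potential services $\mathbf S(t)\in\mathbb Z_{\ge0}^n$ are i.i.d. over $t$, independent of arrivals, with $E[S_l(1)]=\mu_l>0$, $\mathrm{Var}(S_l(1))=\sigma_l^2$, $S_l(1)\le S_{\max}$ a.s., and $\mu_1\le\dots\le\mu_n$. All $A(t)$ arrivals of slot $t$ go to one queue, encoded by $\mathbf Z(t)\in\{e_1,\dots,e_n\}$, and $\mathbf Q(t+1)=[\mathbf Q(t)+A(t)\mathbf Z(t)-\mathbf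 S(t)]^+=\mathbf Q(t)+A(t)\mathbf Z(t)-\mathbf S(t)+\mathbf U(t)$, where $\mathbf U(t)\ge0$ is the unused service ($0\le U_l(t)\le S_l(t)$, $Q_l(t+1)U_l(t)=0$). Policy class $\Pi$. A policy is given by an integer $T\ge1$, a vector $\boldsymbol\gamma\in(0,\infty)^n$, a sorting map $L$ and a decision map $Y$. Let $\{V_k\},\{W_k\}$ be i.i.d. Unif$[0,1]$ sequences, independent of each other and of arrivals and services. At each sampling time $kT$ the dispatcher forms a permutation $\eta_k=L\big((Q_l(kT)/\gamma_l)_{l=1}^n,V_k\big)\in\mathcal S_n$ satisfying $Q_{\eta_k(1)}(kT)/\gamma_{\eta_k(1)}\ge\dots\ge Q_{\eta_k(n)}(kT)/\gamma_{\eta_k(n)}$ ($\eta_k(l)$ is the index of the $l$-th longest scaled queue), then draws $\phi(k)=Y(\eta_k,\boldsymbol\mu,W_k)=(\phi_1(k),\dots,\phi_T(k))\in\{e_1,\dots,e_n\}^T$, and sets $\mathbf Z(kT+j)=\phi_{j+1}(k)$ for $j=0,\dots,T-1$. The process $\mathbf X(t)=(\mathbf Q(t),\phi(\lfloor t/T\rfloor),t-T\lfloor t/T\rfloor)$ is a discrete-time Markov chain. Dispatching statistics. For $\eta\in\mathcal S_n$, $l\in[n]$, let $N_\eta(l)=\sum_{j=1}^T(\phi_j)_{\eta(l)}$ where $\phi=Y(\eta,\boldsymbol\mu,W)$, $W\sim$ Unif$[0,1]$ (the number of slots of a frame in which arrivals go to the $l$-th longest scaled queue when the frame's permutation is $\eta$).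 Define $f_{l,\eta}=E[N_\eta(l)/T]$ and $\tau^2_{l,\eta}=\mathrm{Var}(N_\eta(l)/T)$; thus $f_{l,\eta}\ge0$ and $\sum_l f_{l,\eta}=1$. Convention: $a/0=+\infty$ for $a>0$. *)

theory Defs
  imports "HOL-Probability.Probability"
begin

text \<open>Queues are indexed by 0..<n (paper: 1..n). A state of the chain
 X(t) = (Q(t), phi(floor(t/T)), t mod T) is a triple (q, ph, j):
 q = queue lengths (list of length n), ph = frame decision (list of length T
 of queue indices; index i encodes e_(i+1)), j = position inside the frame.\<close>

type_synonym qstate = "nat list \<times> nat list \<times> nat"

definition unifm :: "real measure" where
  "unifm = uniform_measure lborel {0..1}"

definition frame_decision ::
  "((nat \<Rightarrow> real) \<Rightarrow> real \<Rightarrow> (nat \<Rightarrow> nat)) \<Rightarrow> ((nat \<Rightarrow> nat) \<Rightarrow> (nat \<Rightarrow> real) \<Rightarrow> real \<Rightarrow> nat list)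
   \<Rightarrow> (nat \<Rightarrow> real) \<Rightarrow> (nat \<Rightarrow> real) \<Rightarrow> nat list \<Rightarrow> nat list measure" where
  "frame_decision L Y \<gamma> \<mu> q =
     bind unifm (\<lambda>v. bind unifm (\<lambda>w.
       return (count_space UNIV) (Y (L (\<lambda>l. real (q ! l) / \<gamma> l) v) \<mu> w)))"

definition queue_update :: "nat \<Rightarrow> nat list \<Rightarrow> nat \<Rightarrow> nat \<Rightarrow> nat list \<Rightarrow> nat list" where
  "queue_update n q z a s =
     map (\<lambda>l. nat (int (q ! l) + (if l = z then int a else 0) - int (s ! l))) [0..<n]"

definition dispatch_kernel ::
  "nat \<Rightarrow> nat \<Rightarrow> (nat \<Rightarrow> real) \<Rightarrow> (nat \<Rightarrow> real)
   \<Rightarrow> ((nat \<Rightarrow> real) \<Rightarrow> real \<Rightarrow> (nat \<Rightarrow> nat)) \<Rightarrow> ((nat \<Rightarrow> nat) \<Rightarrow> (nat \<Rightarrow> real) \<Rightarrow> real \<Rightarrow> nat list)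
   \<Rightarrow> nat pmf \<Rightarrow> nat list pmf \<Rightarrow> qstate \<Rightarrow> qstate measure" where
  "dispatch_kernel n T \<gamma> \<mu> L Y pA pS = (\<lambda>(q, ph, j).
     bind (measure_pmf pA) (\<lambda>a. bind (measure_pmf pS) (\<lambda>s.
       let q' = queue_update n q (ph ! j) a s in
       if Suc j < T then return (count_space UNIV) (q', ph, Suc j)
       else bind (frame_decision L Y \<gamma> \<mu> q') (\<lambda>ph'. return (count_space UNIV) (q', ph', 0)))))"

definition valid_state :: "nat \<Rightarrow> nat \<Rightarrow> qstate \<Rightarrow> bool" where
  "valid_state n T x = (case x of (q, ph, j) \<Rightarrow>
     length q = n \<and> length ph = T \<and> j < T \<and> (\<forall>i\<in>set ph. i < n))"

definition f_stat :: "nat \<Rightarrow> ((nat \<Rightarrow> nat) \<Rightarrow> (nat \<Rightarrow> real) \<Rightarrow> real \<Rightarrow> nat list) \<Rightarrow> (nat \<Rightarrow> real)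
   \<Rightarrow> (nat \<Rightarrow> nat) \<Rightarrow> nat \<Rightarrow> real" where
  "f_stat T Y \<mu> \<eta> l =
     integral\<^sup>L unifm (\<lambda>w. real (card {j. j < T \<and> Y \<eta> \<mu> w ! j = \<eta> l}) / real T)"

text \<open>Generic countable-state Markov chain notions for a kernel K.
 avoid K A k x = P_x(X_1 \<notin> A, ..., X_k \<notin> A).\<close>
primrec avoid :: "('s \<Rightarrow> 's measure) \<Rightarrow> 's set \<Rightarrow> nat \<Rightarrow> 's \<Rightarrow> ennreal" where
  "avoid K A 0 x = 1"
| "avoid K A (Suc k) x = (\<integral>\<^sup>+ y. indicator (- A) y * avoid K A k y \<partial>K x)"

text \<open>E_x[tau_A^+], tau_A^+ = min{t \<ge> 1. X_t \<in> A}, as sum_k P_x(tau_A^+ > k).\<close>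
definition exp_hitting_time :: "('s \<Rightarrow> 's measure) \<Rightarrow> 's set \<Rightarrow> 's \<Rightarrow> ennreal" where
  "exp_hitting_time K A x = (\<Sum>k. avoid K A k x)"

definition pos_recurrent_state :: "('s \<Rightarrow> 's measure) \<Rightarrow> 's \<Rightarrow> bool" where
  "pos_recurrent_state K s \<longleftrightarrow> exp_hitting_time K {s} s < \<infinity>"

text \<open>Positive recurrence of a (possibly reducible) chain on state space S:
 from every state the set of positive recurrent states is reached in finite expected time.\<close>
definition positive_recurrent :: "('s \<Rightarrow> 's measure) \<Rightarrow> 's set \<Rightarrow> bool" where
  "positive_recurrent K S \<longleftrightarrow>
     (\<forall>x\<in>S. exp_hitting_time K {s. pos_recurrent_state K s} x < \<infinity>)"

end

theory Submission
  imports Defs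
begin


section \<open>Generic chain theory for pmf kernels\<close>

lemma ennreal_suminf_head: "(\<Sum>n. f n) = f 0 + (\<Sum>n. f (Suc n)::ennreal)"
proof -
  have "(\<lambda>n. f (Suc n)) sums (\<Sum>n. f (Suc n))" by (simp add: summable_sums)
  then have "f sums ((\<Sum>n. f (Suc n)) + f 0)" by (rule sums_Suc)
  then show ?thesis by (simp add: sums_unique[symmetric] add.commute)
qed

lemma avoid_le1: "avoid (\<lambda>x. measure_pmf (P x)) A k x \<le> 1"
proof (induction k arbitrary: x)
  case 0 then show ?case by simp
next
  case (Suc k)
  have le: "indicator (- A) y * avoid (\<lambda>x. measure_pmf (P x)) A k y \<le> 1" for y
    using Suc.IH[of y] by (simp add: indicator_def)
  have "avoid (\<lambda>x. measure_pmf (P x)) A (Suc k) x \<le> (\<integral>\<^sup>+ y. 1 \<partial>measure_pmf (P x))"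
    using le by (simp only: avoid.simps) (rule nn_integral_mono)
  also have "\<dots> = 1" by simp
  finally show ?case .
qed

lemma avoid_anti: "B \<subseteq> A \<Longrightarrow> avoid K A k x \<le> avoid K B k x"
proof (induction k arbitrary: x)
  case 0 then show ?case by simp
next
  case (Suc k)
  show ?case using Suc
    by (auto intro!: nn_integral_mono mult_mono simp: indicator_def)
qed

lemma hit_anti: "B \<subseteq> A \<Longrightarrow> exp_hitting_time K A x \<le> exp_hitting_time K B x"
  unfolding exp_hitting_time_def by (intro suminf_le avoid_anti) auto

lemma hit_eq: "exp_hitting_time (\<lambda>x. measure_pmf (P x)) A x =
   1 + (\<integral>\<^sup>+ y. indicator (- A) y * exp_hitting_time (\<lambda>x. measure_pmf (P x)) A y \<partial>measure_pmf (P x))"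
proof -
  let ?K = "\<lambda>x. measure_pmf (P x)"
  have "exp_hitting_time ?K A x = (\<Sum>k. avoid ?K A (Suc k) x) + avoid ?K A 0 x"
    unfolding exp_hitting_time_def by (subst ennreal_suminf_head) (simp add: add.commute)
  also have "(\<Sum>k. avoid ?K A (Suc k) x) = (\<Sum>k. \<integral>\<^sup>+ y. indicator (- A) y * avoid ?K A k y \<partial>?K x)"
    by simp
  also have "\<dots> = (\<integral>\<^sup>+ y. (\<Sum>k. indicator (- A) y * avoid ?K A k y) \<partial>?K x)"
    by (rule nn_integral_suminf[symmetric]) simp
  also have "\<dots> = (\<integral>\<^sup>+ y. indicator (- A) y * exp_hitting_time ?K A y \<partial>?K x)"
    by (simp only: ennreal_suminf_cmult exp_hitting_time_def)
  finally show ?thesis by (simp add: add.commute)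
qed

lemma hit_le_super:
  fixes g :: "'s \<Rightarrow> ennreal"
  assumes closed: "\<And>x. x \<in> S \<Longrightarrow> set_pmf (P x) \<subseteq> S"
    and sup: "\<And>x. x \<in> S \<Longrightarrow> 1 + (\<integral>\<^sup>+ y. indicator (- A) y * g y \<partial>measure_pmf (P x)) \<le> g x"
    and x: "x \<in> S"
  shows "exp_hitting_time (\<lambda>x. measure_pmf (P x)) A x \<le> g x"
proof -
  let ?K = "\<lambda>x. measure_pmf (P x)"
  have part: "\<forall>x\<in>S. (\<Sum>k<N. avoid ?K A k x) \<le> g x" for N
  proof (induction N)
    case 0 then show ?case by simp
  next
    case (Suc N)
    show ?case
    proof
      fix x assume xS: "x \<in> S"
      have "(\<Sum>k<Suc N. avoid ?K A k x) = 1 + (\<Sum>k<N. avoid ?K A (Suc k) x)"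
        by (subst sum.lessThan_Suc_shift) simp
      also have "(\<Sum>k<N. avoid ?K A (Suc k) x) = (\<Sum>k<N. \<integral>\<^sup>+ y. indicator (- A) y * avoid ?K A k y \<partial>?K x)"
        by simp
      also have "\<dots> = (\<integral>\<^sup>+ y. (\<Sum>k<N. indicator (- A) y * avoid ?K A k y) \<partial>?K x)"
        by (rule nn_integral_sum[symmetric]) simp
      also have "\<dots> = (\<integral>\<^sup>+ y. indicator (- A) y * (\<Sum>k<N. avoid ?K A k y) \<partial>?K x)"
        by (simp only: sum_distrib_left)
      also have "\<dots> \<le> (\<integral>\<^sup>+ y. indicator (- A) y * g y \<partial>?K x)"
      proof (rule nn_integral_mono_AE)
        show "AE y in ?K x. indicator (- A) y * (\<Sum>k<N. avoid ?K A k y) \<le> indicator (- A) y * g y"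
          using Suc closed[OF xS] by (auto simp: AE_measure_pmf_iff intro!: mult_left_mono)
      qed
      finally show "(\<Sum>k<Suc N. avoid ?K A k x) \<le> g x"
        using sup[OF xS] by (meson add_left_mono order_trans)
    qed
  qed
  show ?thesis unfolding exp_hitting_time_def
    using part x by (intro suminf_le_const) auto
qed

primrec first :: "('s \<Rightarrow> 's pmf) \<Rightarrow> 's set \<Rightarrow> 's \<Rightarrow> nat \<Rightarrow> 's \<Rightarrow> ennreal" where
  "first P C c 0 x = emeasure (measure_pmf (P x)) {c}"
| "first P C c (Suc k) x = (\<integral>\<^sup>+ y. indicator (- C) y * first P C c k y \<partial>measure_pmf (P x))"

definition pc :: "('s \<Rightarrow> 's pmf) \<Rightarrow> 's set \<Rightarrow> 's \<Rightarrow> 's \<Rightarrow> ennreal" where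
  "pc P C c x = (\<Sum>k. first P C c k x)"

lemma pc_eq: "pc P C c x = emeasure (measure_pmf (P x)) {c} +
   (\<integral>\<^sup>+ y. indicator (- C) y * pc P C c y \<partial>measure_pmf (P x))"
proof -
  have "pc P C c x = (\<Sum>k. first P C c (Suc k) x) + first P C c 0 x"
    unfolding pc_def by (subst ennreal_suminf_head) (simp add: add.commute)
  also have "(\<Sum>k. first P C c (Suc k) x) = (\<Sum>k. \<integral>\<^sup>+ y. indicator (- C) y * first P C c k y \<partial>measure_pmf (P x))"
    by simp
  also have "\<dots> = (\<integral>\<^sup>+ y. (\<Sum>k. indicator (- C) y * first P C c k y) \<partial>measure_pmf (P x))"
    by (rule nn_integral_suminf[symmetric]) simp
  also have "\<dots> = (\<integral>\<^sup>+ y. indicator (- C) y * pc P C c y \<partial>measure_pmf (P x))"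
    by (simp only: ennreal_suminf_cmult pc_def)
  finally show ?thesis by (simp add: add.commute)
qed

lemma pc_le1:
  assumes c: "c \<in> C"
  shows "pc P C c x \<le> 1"
proof -
  let ?K = "\<lambda>x. measure_pmf (P x)"
  have part: "\<forall>x. (\<Sum>k<N. first P C c k x) + avoid ?K C N x \<le> 1" for N
  proof (induction N)
    case 0 then show ?case by simp
  next
    case (Suc N)
    show ?case
    proof
      fix x
      have "(\<Sum>k<Suc N. first P C c k x) + avoid ?K C (Suc N) x
         = emeasure (?K x) {c} + ((\<Sum>k<N. first P C c (Suc k) x) + avoid ?K C (Suc N) x)"
        by (subst sum.lessThan_Suc_shift) (simp add: add.assoc)
      also have "(\<Sum>k<N. first P C c (Suc k) x) = (\<Sum>k<N. \<integral>\<^sup>+ y. indicator (- C) y * first P C c k y \<partial>?K x)"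
        by simp
      also have "\<dots> = (\<integral>\<^sup>+ y. (\<Sum>k<N. indicator (- C) y * first P C c k y) \<partial>?K x)"
        by (rule nn_integral_sum[symmetric]) simp
      also have "avoid ?K C (Suc N) x = (\<integral>\<^sup>+ y. indicator (- C) y * avoid ?K C N y \<partial>?K x)"
        by simp
      also have "(\<integral>\<^sup>+ y. (\<Sum>k<N. indicator (- C) y * first P C c k y) \<partial>?K x) + \<dots>
          = (\<integral>\<^sup>+ y. (\<Sum>k<N. indicator (- C) y * first P C c k y) + indicator (- C) y * avoid ?K C N y \<partial>?K x)"
        by (rule nn_integral_add[symmetric]) auto
      also have "\<dots> = (\<integral>\<^sup>+ y. indicator (- C) y * ((\<Sum>k<N. first P C c k y) + avoid ?K C N y) \<partial>?K x)"
        by (simp only: sum_distrib_left distrib_left)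
      also have "\<dots> \<le> (\<integral>\<^sup>+ y. indicator (- C) y \<partial>?K x)"
        using Suc by (intro nn_integral_mono) (auto simp: indicator_def)
      also have "\<dots> = emeasure (?K x) (- C)" by simp
      also have "emeasure (?K x) {c} + emeasure (?K x) (- C) = emeasure (?K x) ({c} \<union> - C)"
        using c by (subst plus_emeasure) auto
      also have "\<dots> \<le> 1" by (simp add: measure_pmf.emeasure_le_1)
      finally show "(\<Sum>k<Suc N. first P C c k x) + avoid ?K C (Suc N) x \<le> 1"
        by (simp add: add_left_mono)
    qed
  qed
  have "(\<Sum>k<N. first P C c k x) \<le> 1" for N
    using part[of N] by (meson add_increasing2 order_trans zero_le order_refl le_iff_add)
  then show ?thesis unfolding pc_def by (intro suminf_le_const) auto
qed




lemma step_a: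
  fixes P :: "'s \<Rightarrow> 's pmf"
  defines "K \<equiv> \<lambda>x. measure_pmf (P x)"
  assumes c: "c \<in> C" and hfin: "exp_hitting_time K C c < \<infinity>" and p1: "pc P C c c < 1"
  shows "\<exists>M::real. \<forall>x. exp_hitting_time K (C - {c}) x \<le> exp_hitting_time K C x + pc P C c x * ennreal M"
proof -
  define r where "r = enn2real (exp_hitting_time K C c)"
  define p where "p = enn2real (pc P C c c)"
  have r0: "r \<ge> 0" and p0: "p \<ge> 0" by (auto simp: r_def p_def)
  have hr: "exp_hitting_time K C c = ennreal r" using hfin by (simp add: r_def)
  have ptop: "pc P C c c \<noteq> \<top>" using p1 by (metis ennreal_1 ennreal_less_top order.strict_trans less_irrefl)
  have pp: "pc P C c c = ennreal p" using ptop by (simp add: p_def ennreal_enn2real_if)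
  have plt: "p < 1" using p1 pp p0 by (simp add: ennreal_less_iff)
  define m where "m = r / (1 - p)"
  have rm: "r + p * m = m" using plt by (simp add: m_def field_simps)
  define g where "g = (\<lambda>y. exp_hitting_time K C y + pc P C c y * ennreal m)"
  have gc: "g c = ennreal m"
    using rm r0 p0 plt by (simp add: g_def hr pp ennreal_mult'[symmetric] ennreal_plus[symmetric] m_def del: ennreal_plus)
  have "exp_hitting_time (\<lambda>x. measure_pmf (P x)) (C - {c}) x \<le> g x" for x
  proof (rule hit_le_super[where S=UNIV])
    fix x :: 's
    let ?M = "measure_pmf (P x)"
    have split: "indicator (- (C - {c})) y * g y = indicator (- C) y * exp_hitting_time K C y
        + ennreal m * (indicator (- C) y * pc P C c y) + indicator {c} y * g y" for y
      using c by (auto simp: indicator_def g_def algebra_simps)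
    have "(\<integral>\<^sup>+ y. indicator (- (C - {c})) y * g y \<partial>?M)
       = (\<integral>\<^sup>+ y. indicator (- C) y * exp_hitting_time K C y \<partial>?M)
         + ennreal m * (\<integral>\<^sup>+ y. indicator (- C) y * pc P C c y \<partial>?M)
         + (\<integral>\<^sup>+ y. indicator {c} y * g y \<partial>?M)"
      by (simp only: split, subst nn_integral_add, simp, simp, subst nn_integral_add, simp, simp,
          subst nn_integral_cmult, simp, simp)
    also have "(\<integral>\<^sup>+ y. indicator {c} y * g y \<partial>?M) = g c * emeasure ?M {c}"
      using nn_integral_indicator_singleton[of c ?M g] by (simp add: mult.commute)
    finally have eq: "1 + (\<integral>\<^sup>+ y. indicator (- (C - {c})) y * g y \<partial>?M)
        = (1 + (\<integral>\<^sup>+ y. indicator (- C) y * exp_hitting_time K C y \<partial>?M))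
          + ennreal m * (emeasure ?M {c} + (\<integral>\<^sup>+ y. indicator (- C) y * pc P C c y \<partial>?M))"
      by (simp add: gc algebra_simps)
    show "1 + (\<integral>\<^sup>+ y. indicator (- (C - {c})) y * g y \<partial>?M) \<le> g x"
      unfolding eq using hit_eq[of P C x] pc_eq[of P C c x]
      by (simp add: g_def K_def mult.commute)
  qed auto
  then show ?thesis unfolding K_def g_def by blast
qed




lemma step_b:
  fixes P :: "'s \<Rightarrow> 's pmf"
  defines "K \<equiv> \<lambda>x. measure_pmf (P x)"
  assumes c: "c \<in> C" and p1: "pc P C c c \<ge> 1"
  shows "exp_hitting_time K {c} c \<le> exp_hitting_time K C c"
proof -
  define g where "g = (\<lambda>y. if pc P C c y \<ge> 1 then exp_hitting_time K C y else \<top>)"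
  have "exp_hitting_time (\<lambda>x. measure_pmf (P x)) {c} x \<le> g x" for x
  proof (rule hit_le_super[where S=UNIV])
    fix x :: 's
    let ?M = "measure_pmf (P x)"
    show "1 + (\<integral>\<^sup>+ y. indicator (- {c}) y * g y \<partial>?M) \<le> g x"
    proof (cases "pc P C c x \<ge> 1")
      case False then show ?thesis by (simp add: g_def)
    next
      case True
      define u where "u = (\<integral>\<^sup>+ y. indicator (- C) y * pc P C c y \<partial>?M)"
      define w where "w = emeasure ?M (- C)"
      define e where "e = emeasure ?M {c}"
      define z where "z = emeasure ?M (C - {c})"
      have pcx: "pc P C c x = e + u" using pc_eq[of P C c x] by (simp add: e_def u_def)
      have uw: "u \<le> w"
      proof -
        have "u \<le> (\<integral>\<^sup>+ y. indicator (- C) y \<partial>?M)"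
          unfolding u_def using pc_le1[OF c, of P]
          by (intro nn_integral_mono) (auto simp: indicator_def)
        then show ?thesis by (simp add: w_def)
      qed
      have ewz: "e + w + z \<le> 1"
      proof -
        have "e + w = emeasure ?M ({c} \<union> - C)"
          unfolding e_def w_def using c by (intro plus_emeasure) auto
        then have "e + w + z = emeasure ?M ({c} \<union> - C) + emeasure ?M (C - {c})" by (simp add: z_def)
        also have "\<dots> = emeasure ?M ({c} \<union> - C \<union> (C - {c}))"
          by (intro plus_emeasure) auto
        also have "\<dots> \<le> 1" by (simp add: measure_pmf.emeasure_le_1)
        finally show ?thesis .
      qed
      have efin: "e \<noteq> \<top>" unfolding e_def by (simp add: measure_pmf.emeasure_finite)
      have wfin: "w \<noteq> \<top>" unfolding w_def by (simp add: measure_pmf.emeasure_finite)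
      have "e + w + z \<le> e + u" using ewz True pcx by (simp add: order_trans)
      also have "\<dots> \<le> e + w" using uw by (simp add: add_left_mono)
      finally have A: "e + w + z \<le> e + w" .
      then have z0: "z = 0"
      proof -
        have "(e + w) + z \<le> (e + w) + 0" using A by simp
        then have "z \<le> 0" using efin wfin by (simp add: ennreal_add_left_cancel_le del: add_0_right)
        then show ?thesis by simp
      qed
      have wu: "w \<le> u"
      proof -
        have "e + w \<le> e + w + z" by simp
        also have "\<dots> \<le> e + u" by fact
        finally show ?thesis using efin by (simp add: ennreal_add_left_cancel_le)
      qed
      have ufin: "u \<noteq> \<top>" using uw wfin by (auto simp: top_unique)
      have "(\<integral>\<^sup>+ y. indicator (- C) y - indicator (- C) y * pc P C c y \<partial>?M)
            = (\<integral>\<^sup>+ y. indicator (- C) y \<partial>?M) - u"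
        unfolding u_def
      proof (rule nn_integral_diff)
        show "(\<integral>\<^sup>+ y. indicator (- C) y * pc P C c y \<partial>?M) \<noteq> \<infinity>" using ufin by (simp add: u_def)
        show "AE y in ?M. indicator (- C) y * pc P C c y \<le> indicator (- C) y"
          using pc_le1[OF c, of P] by (auto simp: indicator_def)
      qed auto
      also have "\<dots> = 0" using uw wu using ufin by (simp add: w_def diff_eq_0_iff_ennreal)
      finally have "AE y in ?M. indicator (- C) y - indicator (- C) y * pc P C c y = 0"
        by (subst (asm) nn_integral_0_iff_AE) auto
      then have AE1: "AE y in ?M. y \<notin> C \<longrightarrow> pc P C c y \<ge> 1"
        by eventually_elim (auto simp: indicator_def diff_eq_0_iff_ennreal)
      have AE2: "AE y in ?M. y \<notin> C - {c}"
        using z0 unfolding z_def by (intro AE_I'[of "C - {c}"]) auto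
      have "(\<integral>\<^sup>+ y. indicator (- {c}) y * g y \<partial>?M) = (\<integral>\<^sup>+ y. indicator (- C) y * exp_hitting_time K C y \<partial>?M)"
      proof (rule nn_integral_cong_AE)
        show "AE y in ?M. indicator (- {c}) y * g y = indicator (- C) y * exp_hitting_time K C y"
          using AE1 AE2
        proof eventually_elim
          case (elim y)
          show ?case
          proof (cases "y \<in> C")
            case True
            then have "y = c" using elim by blast
            then show ?thesis using c by simp
          next
            case False
            then show ?thesis using elim c by (auto simp: g_def indicator_def)
          qed
        qed
      qed
      then show ?thesis using hit_eq[of P C x] True by (simp add: g_def K_def)
    qed
  qed auto
  from this[of c] show ?thesis using p1 unfolding K_def g_def by simp
qed




lemma reach_PR:
  fixes P :: "'s \<Rightarrow> 's pmf"
  assumes "finite C"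
  shows "C \<subseteq> S \<Longrightarrow> (\<forall>x\<in>S. exp_hitting_time (\<lambda>x. measure_pmf (P x)) C x < \<infinity>) \<Longrightarrow>
    \<forall>x\<in>S. exp_hitting_time (\<lambda>x. measure_pmf (P x)) {s. pos_recurrent_state (\<lambda>x. measure_pmf (P x)) s} x < \<infinity>"
  using assms
proof (induction C rule: finite_psubset_induct)
  case (psubset C)
  let ?K = "\<lambda>x. measure_pmf (P x)"
  show ?case
  proof (cases "\<exists>c\<in>C. pc P C c c < 1")
    case True
    then obtain c where c: "c \<in> C" "pc P C c c < 1" by blast
    have hc: "exp_hitting_time ?K C c < \<infinity>" using psubset.prems c by blast
    obtain M where M: "\<And>x. exp_hitting_time ?K (C - {c}) x \<le> exp_hitting_time ?K C x + pc P C c x * ennreal M"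
      using step_a[OF c(1) hc c(2)] by blast
    have fin: "\<forall>x\<in>S. exp_hitting_time ?K (C - {c}) x < \<infinity>"
    proof
      fix x assume x: "x \<in> S"
      have "pc P C c x * ennreal M \<le> 1 * ennreal M"
        using pc_le1[OF c(1)] by (intro mult_right_mono) auto
      then have "pc P C c x * ennreal M < \<infinity>" by (simp add: le_less_trans)
      moreover have "exp_hitting_time ?K C x < \<infinity>" using psubset.prems x by blast
      ultimately have "exp_hitting_time ?K C x + pc P C c x * ennreal M < \<infinity>" by simp
      then show "exp_hitting_time ?K (C - {c}) x < \<infinity>"
        using M[of x] by (rule le_less_trans[rotated])
    qed
    have sub: "C - {c} \<subset> C" using c by blast
    have "C - {c} \<subseteq> S" using psubset.prems by blast
    show ?thesis by (rule psubset.IH[OF sub \<open>C - {c} \<subseteq> S\<close> fin])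
  next
    case False
    have "C \<subseteq> {s. pos_recurrent_state ?K s}"
    proof
      fix c assume c: "c \<in> C"
      then have "pc P C c c \<ge> 1" using False by (simp add: not_less)
      then have "exp_hitting_time ?K {c} c \<le> exp_hitting_time ?K C c"
        by (rule step_b[OF c])
      also have "\<dots> < \<infinity>" using psubset.prems c by blast
      finally show "c \<in> {s. pos_recurrent_state ?K s}" by (simp add: pos_recurrent_state_def)
    qed
    then have "exp_hitting_time ?K {s. pos_recurrent_state ?K s} x \<le> exp_hitting_time ?K C x" for x
      by (rule hit_anti)
    then show ?thesis using psubset.prems(2) by (meson le_less_trans)
  qed
qed




lemma unifm_prob: "prob_space unifm"
  unfolding unifm_def by (intro prob_space_uniform_measure) auto

lemma space_unifm[simp]: "space unifm = UNIV"
  by (simp add: unifm_def)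

lemma sets_unifm[simp]: "sets unifm = sets borel"
  by (simp add: unifm_def)

lemma AE_unifm: "AE v in unifm. v \<in> {0..1}"
  unfolding unifm_def by (subst AE_uniform_measure) auto

lemma bind_return_space:
  fixes f :: "real \<Rightarrow> 'b"
  shows "bind unifm (\<lambda>w. return (count_space UNIV) (f w)) \<in> space (subprob_algebra (count_space UNIV))"
proof -
  let ?N = "count_space (UNIV :: 'b set)"
  let ?F = "\<lambda>w. return ?N (f w)"
  have ne: "space unifm \<noteq> {}" by simp
  have eq: "bind unifm ?F = join (distr unifm (subprob_algebra ?N) ?F)"
    unfolding bind_nonempty[OF ne]
    by (subst subprob_algebra_cong[of "?F (SOME x. x \<in> space unifm)" ?N]) simp_all
  define D where "D = distr unifm (subprob_algebra ?N) ?F"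
  have "D \<in> space (subprob_algebra (subprob_algebra ?N))"
  proof -
    have sD: "sets D = sets (subprob_algebra ?N)" by (simp add: D_def)
    have spD: "space D = space (subprob_algebra ?N)" by (simp add: D_def)
    have "return ?N undefined \<in> space (subprob_algebra ?N)"
      by (simp add: space_subprob_algebra prob_space_imp_subprob_space prob_space_return)
    then have ne2: "space D \<noteq> {}" using spD by auto
    have "emeasure D (space D) \<le> 1"
    proof -
      have "emeasure D (space D) = (if space D \<in> sigma_sets (space (subprob_algebra ?N)) (sets (subprob_algebra ?N)) \<and>
          measure_space (space (subprob_algebra ?N)) (sigma_sets (space (subprob_algebra ?N)) (sets (subprob_algebra ?N)))
            (\<lambda>A. emeasure unifm (?F -` A \<inter> space unifm))
          then emeasure unifm (?F -` space D \<inter> space unifm) else 0)"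
        unfolding D_def distr_def by (simp add: emeasure_measure_of_conv)
      also have "\<dots> \<le> 1"
        using prob_space.emeasure_le_1[OF unifm_prob] by auto
      finally show ?thesis .
    qed
    then have "subprob_space D" using ne2 by (rule subprob_spaceI)
    then show ?thesis using sD by (simp add: space_subprob_algebra)
  qed
  then have "join D \<in> space (subprob_algebra ?N)"
    by (rule measurable_space[OF measurable_join])
  then show ?thesis unfolding eq D_def .
qed

lemma measure_pmf_Abs_pmf:
  fixes M :: "'a::countable measure"
  assumes pM: "prob_space M" and sM: "sets M = UNIV"
  shows "measure_pmf (Abs_pmf M) = M"
proof -
  interpret prob_space M by fact
  have AE: "AE x in M. measure M {x} \<noteq> 0"
  proof (rule AE_mp[OF AE_discrete_difference[of "{x. measure M {x} = 0}"]])
    show "countable {x. measure M {x} = 0}" by simp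
    show "emeasure M {x} = 0" if "x \<in> {x. measure M {x} = 0}" for x
      using that by (simp add: emeasure_eq_measure)
    show "{x} \<in> sets M" for x using sM by simp
  qed auto
  show ?thesis by (rule Abs_pmf_inverse) (use pM sM AE in auto)
qed




locale qsys =
  fixes n T :: nat and lam Amax :: real and Smax :: nat
    and \<mu> \<gamma> :: "nat \<Rightarrow> real" and pA :: "nat pmf" and pS :: "nat list pmf"
    and L :: "(nat \<Rightarrow> real) \<Rightarrow> real \<Rightarrow> (nat \<Rightarrow> nat)"
    and Y :: "(nat \<Rightarrow> nat) \<Rightarrow> (nat \<Rightarrow> real) \<Rightarrow> real \<Rightarrow> nat list"
  assumes n_pos: "n \<ge> 1" and T_pos: "T \<ge> 1"
    and arr_mean: "measure_pmf.expectation pA real = real n * lam"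
    and arr_bd: "\<forall>a\<in>set_pmf pA. real a \<le> real n * Amax"
    and srv_len: "\<forall>s\<in>set_pmf pS. length s = n \<and> (\<forall>l<n. s ! l \<le> Smax)"
    and srv_mean: "\<forall>l<n. measure_pmf.expectation pS (\<lambda>s. real (s ! l)) = \<mu> l"
    and gamma_pos: "\<forall>l<n. \<gamma> l > 0"
    and L_meas: "\<forall>x. L x \<in> measurable borel (count_space UNIV)"
    and L_sort: "\<forall>x v. v \<in> {0..1} \<longrightarrow> L x v permutes {..<n} \<and>
                   (\<forall>i j. i \<le> j \<longrightarrow> j < n \<longrightarrow> x (L x v i) \<ge> x (L x v j))"
    and Y_meas: "\<forall>\<eta>. \<eta> permutes {..<n} \<longrightarrow> Y \<eta> \<mu> \<in> measurable borel (count_space UNIV)"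
    and Y_range: "\<forall>\<eta> w. \<eta> permutes {..<n} \<longrightarrow> w \<in> {0..1} \<longrightarrow>
                   length (Y \<eta> \<mu> w) = T \<and> (\<forall>i\<in>set (Y \<eta> \<mu> w). i < n)"
    and stab: "\<forall>\<eta>. \<eta> permutes {..<n} \<longrightarrow> (\<forall>m\<in>{1..n}.
                 real n * lam * (\<Sum>l<m. f_stat T Y \<mu> \<eta> l) < (\<Sum>l<m. \<mu> (\<eta> l)))"
begin

definition xq :: "nat list \<Rightarrow> nat \<Rightarrow> real" where "xq q l = real (q ! l) / \<gamma> l"

definition Gm :: "(nat \<Rightarrow> nat) \<Rightarrow> nat list measure" where
  "Gm \<eta> = bind unifm (\<lambda>w. return (count_space UNIV) (Y \<eta> \<mu> w))"

abbreviation FD where "FD q \<equiv> frame_decision L Y \<gamma> \<mu> q"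

definition Vph :: "nat list set" where "Vph = {ph. length ph = T \<and> (\<forall>i\<in>set ph. i < n)}"

lemma Gm_space: "Gm \<eta> \<in> space (subprob_algebra (count_space UNIV))"
  unfolding Gm_def by (rule bind_return_space)

lemma sets_Gm: "sets (Gm \<eta>) = sets (count_space UNIV)"
  using Gm_space[of \<eta>] unfolding space_subprob_algebra by blast

lemma space_Gm[simp]: "space (Gm \<eta>) = UNIV"
  using sets_eq_imp_space_eq[OF sets_Gm] by simp

lemma Y_meas': "\<eta> permutes {..<n} \<Longrightarrow> Y \<eta> \<mu> \<in> measurable unifm (count_space UNIV)"
  by (subst measurable_cong_sets[OF sets_unifm refl]) (use Y_meas in blast)

lemma Gm_ret_meas: "\<eta> permutes {..<n} \<Longrightarrow>
   (\<lambda>w. return (count_space UNIV) (Y \<eta> \<mu> w)) \<in> measurable unifm (subprob_algebra (count_space UNIV))"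
  by (rule measurable_compose[OF Y_meas' return_measurable])

lemma Gm_nn:
  assumes "\<eta> permutes {..<n}"
  shows "(\<integral>\<^sup>+ y. f y \<partial>Gm \<eta>) = (\<integral>\<^sup>+ w. f (Y \<eta> \<mu> w) \<partial>unifm)"
  unfolding Gm_def
  by (subst nn_integral_bind[OF _ Gm_ret_meas[OF assms]]) (auto simp: nn_integral_return)

lemma Gm_prob:
  assumes "\<eta> permutes {..<n}"
  shows "emeasure (Gm \<eta>) UNIV = 1"
proof -
  have "emeasure (Gm \<eta>) UNIV = (\<integral>\<^sup>+ y. 1 \<partial>Gm \<eta>)"
    by simp
  also have "\<dots> = (\<integral>\<^sup>+ w. 1 \<partial>unifm)" by (rule Gm_nn[OF assms])
  also have "\<dots> = 1" using prob_space.emeasure_space_1[OF unifm_prob] by simp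
  finally show ?thesis .
qed

lemma FD_eq: "FD q = bind unifm (\<lambda>v. Gm (L (xq q) v))"
  unfolding frame_decision_def Gm_def xq_def by simp

lemma FD_meas: "(\<lambda>v. Gm (L (xq q) v)) \<in> measurable unifm (subprob_algebra (count_space UNIV))"
proof (rule measurable_compose[of "L (xq q)" unifm "count_space UNIV"])
  show "L (xq q) \<in> measurable unifm (count_space UNIV)"
    by (subst measurable_cong_sets[OF sets_unifm refl]) (use L_meas in blast)
  show "Gm \<in> measurable (count_space UNIV) (subprob_algebra (count_space UNIV))"
    using Gm_space by simp
qed

lemma sets_FD: "sets (FD q) = sets (count_space UNIV)"
  unfolding FD_eq
  by (subst sets_bind[where N="count_space UNIV"])
     (use Gm_space in \<open>auto simp: space_subprob_algebra\<close>)

lemma FD_nn: "(\<integral>\<^sup>+ y. f y \<partial>FD q) = (\<integral>\<^sup>+ v. \<integral>\<^sup>+ w. f (Y (L (xq q) v) \<mu> w) \<partial>unifm \<partial>unifm)"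
proof -
  have "(\<integral>\<^sup>+ y. f y \<partial>FD q) = (\<integral>\<^sup>+ v. \<integral>\<^sup>+ y. f y \<partial>Gm (L (xq q) v) \<partial>unifm)"
    unfolding FD_eq by (rule nn_integral_bind[OF _ FD_meas]) simp
  also have "\<dots> = (\<integral>\<^sup>+ v. \<integral>\<^sup>+ w. f (Y (L (xq q) v) \<mu> w) \<partial>unifm \<partial>unifm)"
  proof (rule nn_integral_cong_AE)
    show "AE v in unifm. (\<integral>\<^sup>+ y. f y \<partial>Gm (L (xq q) v)) = (\<integral>\<^sup>+ w. f (Y (L (xq q) v) \<mu> w) \<partial>unifm)"
      using AE_unifm
    proof eventually_elim
      case (elim v)
      then have "L (xq q) v permutes {..<n}" using L_sort by blast
      then show ?case by (rule Gm_nn)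
    qed
  qed
  finally show ?thesis .
qed

lemma FD_prob: "prob_space (FD q)"
proof
  have "emeasure (FD q) (space (FD q)) = (\<integral>\<^sup>+ y. 1 \<partial>FD q)"
    by (simp add: sets_eq_imp_space_eq[OF sets_FD])
  also have "\<dots> = (\<integral>\<^sup>+ v. \<integral>\<^sup>+ w. 1 \<partial>unifm \<partial>unifm)" by (rule FD_nn)
  also have "\<dots> = 1" using prob_space.emeasure_space_1[OF unifm_prob] by simp
  finally show "emeasure (FD q) (space (FD q)) = 1" .
qed

definition fdp :: "nat list \<Rightarrow> nat list pmf" where "fdp q = Abs_pmf (FD q)"

lemma fdp_eq: "measure_pmf (fdp q) = FD q"
  unfolding fdp_def by (rule measure_pmf_Abs_pmf[OF FD_prob sets_FD[simplified]])

lemma set_fdp: "set_pmf (fdp q) \<subseteq> Vph"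
proof -
  have "(\<integral>\<^sup>+ y. indicator (- Vph) y \<partial>FD q) = (\<integral>\<^sup>+ v. \<integral>\<^sup>+ w. indicator (- Vph) (Y (L (xq q) v) \<mu> w) \<partial>unifm \<partial>unifm)"
    by (rule FD_nn)
  also have "\<dots> = (\<integral>\<^sup>+ v. 0 \<partial>unifm)"
  proof (rule nn_integral_cong_AE)
    show "AE v in unifm. (\<integral>\<^sup>+ w. indicator (- Vph) (Y (L (xq q) v) \<mu> w) \<partial>unifm) = 0"
      using AE_unifm
    proof eventually_elim
      case (elim v)
      then have perm: "L (xq q) v permutes {..<n}" using L_sort by blast
      have "(\<integral>\<^sup>+ w. indicator (- Vph) (Y (L (xq q) v) \<mu> w) \<partial>unifm) = (\<integral>\<^sup>+ w. 0 \<partial>unifm)"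
        using AE_unifm
      proof (intro nn_integral_cong_AE, eventually_elim)
        case (elim w)
        then show ?case using Y_range perm by (auto simp: Vph_def indicator_def)
      qed
      then show ?case by simp
    qed
  qed
  finally have "emeasure (FD q) (- Vph) = 0" by (subst (asm) nn_integral_indicator) (auto simp: sets_FD)
  then have "AE y in FD q. y \<in> Vph"
    by (intro AE_I'[of "- Vph"]) (auto simp: sets_FD null_sets_def)
  then show ?thesis
    unfolding fdp_eq[symmetric] by (auto simp: AE_measure_pmf_iff)
qed

definition Pk :: "qstate \<Rightarrow> qstate pmf" where
  "Pk = (\<lambda>(q, ph, j). bind_pmf pA (\<lambda>a. bind_pmf pS (\<lambda>s.
       let q' = queue_update n q (ph ! j) a s in
       if Suc j < T then return_pmf (q', ph, Suc j)
       else bind_pmf (fdp q') (\<lambda>ph'. return_pmf (q', ph', 0)))))"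

lemma K_eq: "dispatch_kernel n T \<gamma> \<mu> L Y pA pS = (\<lambda>x. measure_pmf (Pk x))"
proof
  fix x :: qstate
  obtain q ph j where x: "x = (q, ph, j)" by (cases x) auto
  show "dispatch_kernel n T \<gamma> \<mu> L Y pA pS x = measure_pmf (Pk x)"
    unfolding x dispatch_kernel_def Pk_def
    by (simp add: measure_pmf_bind Let_def, intro bind_cong refl)
       (auto simp: measure_pmf_bind return_pmf.rep_eq fdp_eq)
qed

end



lemma E_bind:
  fixes h :: "'b \<Rightarrow> real"
  assumes "finite (set_pmf p)" "\<And>x. x \<in> set_pmf p \<Longrightarrow> finite (set_pmf (f x))"
  shows "measure_pmf.expectation (bind_pmf p f) h = measure_pmf.expectation p (\<lambda>x. measure_pmf.expectation (f x) h)"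
  using assms
  by (subst pmf_expectation_bind[of "set_pmf p"], simp_all,
      subst integral_measure_pmf_real[of "set_pmf p"], auto simp: mult.commute)

context qsys begin

definition Bd :: real where "Bd = max 0 (real n * Amax) + real Smax"

lemma Bd_nonneg: "Bd \<ge> 0" by (simp add: Bd_def)

lemma a_le: "a \<in> set_pmf pA \<Longrightarrow> real a \<le> Bd"
  using arr_bd by (force simp: Bd_def)

lemma s_le: "s \<in> set_pmf pS \<Longrightarrow> l < n \<Longrightarrow> real (s ! l) \<le> Bd"
  using srv_len by (force simp: Bd_def)

lemma s_len: "s \<in> set_pmf pS \<Longrightarrow> length s = n"
  using srv_len by blast

lemma finite_pA: "finite (set_pmf pA)"
proof (rule finite_subset)
  show "set_pmf pA \<subseteq> {..nat \<lceil>Bd\<rceil>}"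
  proof
    fix a assume "a \<in> set_pmf pA"
    then have "real a \<le> Bd" by (rule a_le)
    then show "a \<in> {..nat \<lceil>Bd\<rceil>}" by simp linarith
  qed
qed simp

lemma finite_pS: "finite (set_pmf pS)"
proof (rule finite_subset)
  show "set_pmf pS \<subseteq> {s. set s \<subseteq> {..Smax} \<and> length s = n}"
    using srv_len by (auto simp: in_set_conv_nth)
qed (rule finite_lists_length_eq, simp)

lemma finite_Vph: "finite Vph"
proof (rule finite_subset)
  show "Vph \<subseteq> {s. set s \<subseteq> {..<n} \<and> length s = T}" by (auto simp: Vph_def)
qed (rule finite_lists_length_eq, simp)

lemma finite_fdp: "finite (set_pmf (fdp q))"
  using finite_subset[OF set_fdp finite_Vph] .

lemma finite_Pk: "finite (set_pmf (Pk x))"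
proof -
  obtain q ph j where x: "x = (q, ph, j)" by (cases x) auto
  show ?thesis unfolding x Pk_def
    using finite_pA finite_pS finite_fdp by (auto simp: Let_def)
qed

lemma lam_nonneg: "lam \<ge> 0"
proof -
  have "0 \<le> measure_pmf.expectation pA real" by simp
  then show ?thesis using arr_mean n_pos by (simp add: zero_le_mult_iff)
qed

abbreviation EA :: "(nat \<Rightarrow> real) \<Rightarrow> real" where "EA f \<equiv> measure_pmf.expectation pA f"
abbreviation ES :: "(nat list \<Rightarrow> real) \<Rightarrow> real" where "ES f \<equiv> measure_pmf.expectation pS f"

lemma intA[simp]: "integrable (measure_pmf pA) (f :: nat \<Rightarrow> real)"
  by (rule integrable_measure_pmf_finite[OF finite_pA])
lemma intS[simp]: "integrable (measure_pmf pS) (f :: nat list \<Rightarrow> real)"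
  by (rule integrable_measure_pmf_finite[OF finite_pS])

lemma EA_mono: "(\<And>a. a \<in> set_pmf pA \<Longrightarrow> f a \<le> g a) \<Longrightarrow> EA f \<le> EA g"
  by (intro integral_mono_AE) (auto simp: AE_measure_pmf_iff)
lemma ES_mono: "(\<And>s. s \<in> set_pmf pS \<Longrightarrow> f s \<le> g s) \<Longrightarrow> ES f \<le> ES g"
  by (intro integral_mono_AE) (auto simp: AE_measure_pmf_iff)

definition V :: "nat list \<Rightarrow> real" where "V q = (\<Sum>l<n. real (q ! l) ^ 2 / \<gamma> l)"

lemma V_nonneg: "V q \<ge> 0"
  unfolding V_def using gamma_pos by (intro sum_nonneg) auto

lemma xq_nonneg: "l < n \<Longrightarrow> xq q l \<ge> 0"
  unfolding xq_def using gamma_pos by auto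

lemma qu_nth: "l < n \<Longrightarrow> queue_update n q z a s ! l = nat (int (q ! l) + (if l = z then int a else 0) - int (s ! l))"
  by (simp add: queue_update_def)

lemma qu_len[simp]: "length (queue_update n q z a s) = n"
  by (simp add: queue_update_def)

end



context qsys begin

definition K1 :: real where "K1 = (\<Sum>l<n. Bd ^ 2 / \<gamma> l)"

lemma qu_real: "l < n \<Longrightarrow> real (queue_update n q z a s ! l) =
   max 0 (real (q ! l) + ((if l = z then real a else 0) - real (s ! l)))"
  by (simp add: qu_nth) linarith

lemma os_l:
  assumes l: "l < n" and a: "a \<in> set_pmf pA" and s: "s \<in> set_pmf pS"
  shows "real (queue_update n q z a s ! l) ^ 2 / \<gamma> l \<le>
     real (q ! l) ^ 2 / \<gamma> l + 2 * (xq q l * ((if l = z then 1 else 0) * real a - real (s ! l))) + Bd ^ 2 / \<gamma> l"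
proof -
  define d where "d = (if l = z then real a else 0) - real (s ! l)"
  have g: "\<gamma> l > 0" using gamma_pos l by auto
  have dB: "\<bar>d\<bar> \<le> Bd" using a_le[OF a] s_le[OF s l] by (auto simp: d_def)
  have "real (queue_update n q z a s ! l) ^ 2 \<le> (real (q ! l) + d) ^ 2"
    unfolding qu_real[OF l] d_def[symmetric] by (auto simp: max_def power2_eq_square intro: mult_mono)
  also have "\<dots> = real (q ! l) ^ 2 + 2 * real (q ! l) * d + d ^ 2" by (simp add: power2_eq_square algebra_simps)
  also have "d ^ 2 \<le> Bd ^ 2" using dB by (metis abs_le_square_iff abs_of_nonneg Bd_nonneg)
  finally have "real (queue_update n q z a s ! l) ^ 2 \<le> real (q ! l) ^ 2 + 2 * real (q ! l) * d + Bd ^ 2" by simp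
  then have "real (queue_update n q z a s ! l) ^ 2 / \<gamma> l \<le> (real (q ! l) ^ 2 + 2 * real (q ! l) * d + Bd ^ 2) / \<gamma> l"
    using g by (simp add: divide_right_mono)
  also have "\<dots> = real (q ! l) ^ 2 / \<gamma> l + 2 * (xq q l * d) + Bd ^ 2 / \<gamma> l"
    using g by (simp add: xq_def field_simps)
  also have eqd: "d = (if l = z then 1 else 0) * real a - real (s ! l)" by (simp add: d_def)
  finally show ?thesis .
qed

lemma os_pt:
  assumes a: "a \<in> set_pmf pA" and s: "s \<in> set_pmf pS"
  shows "V (queue_update n q z a s) \<le>
     V q + 2 * ((\<Sum>l<n. xq q l * (if l = z then 1 else 0)) * real a) - 2 * (\<Sum>l<n. xq q l * real (s ! l)) + K1"
proof -
  have "V (queue_update n q z a s) \<le> (\<Sum>l<n. real (q ! l) ^ 2 / \<gamma> l + 2 * (xq q l * ((if l = z then 1 else 0) * real a - real (s ! l))) + Bd ^ 2 / \<gamma> l)"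
    unfolding V_def by (intro sum_mono os_l[OF _ a s]) auto
  also have "\<dots> = V q + 2 * ((\<Sum>l<n. xq q l * (if l = z then 1 else 0)) * real a) - 2 * (\<Sum>l<n. xq q l * real (s ! l)) + K1"
    by (simp add: V_def K1_def sum.distrib sum_subtractf sum_distrib_left sum_distrib_right algebra_simps)
  finally show ?thesis .
qed

lemma os_exp:
  "EA (\<lambda>a. ES (\<lambda>s. V (queue_update n q z a s))) \<le>
     V q + 2 * (\<Sum>l<n. xq q l * (real n * lam * (if z = l then 1 else 0) - \<mu> l)) + K1"
proof -
  define W where "W = (\<Sum>l<n. xq q l * (if l = z then 1 else 0))"
  have "EA (\<lambda>a. ES (\<lambda>s. V (queue_update n q z a s))) \<le>
        EA (\<lambda>a. ES (\<lambda>s. V q + 2 * (W * real a) - 2 * (\<Sum>l<n. xq q l * real (s ! l)) + K1))"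
    unfolding W_def by (intro EA_mono ES_mono os_pt)
  also have "\<dots> = EA (\<lambda>a. V q + 2 * (W * real a) - 2 * (\<Sum>l<n. xq q l * \<mu> l) + K1)"
  proof -
    have "ES (\<lambda>s. V q + 2 * (W * real a) - 2 * (\<Sum>l<n. xq q l * real (s ! l)) + K1)
        = V q + 2 * (W * real a) - 2 * (\<Sum>l<n. xq q l * ES (\<lambda>s. real (s ! l))) + K1" for a
      by (simp add: integral_add integral_diff integral_sum)
    then show ?thesis using srv_mean by simp
  qed
  also have "\<dots> = V q + 2 * (W * (real n * lam)) - 2 * (\<Sum>l<n. xq q l * \<mu> l) + K1"
    using arr_mean by (simp add: integral_add integral_diff)
  also have "\<dots> = V q + 2 * (\<Sum>l<n. xq q l * (real n * lam * (if z = l then 1 else 0) - \<mu> l)) + K1"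
  proof -
    have e: "xq q l * (real n * lam * (if z = l then 1 else 0) - \<mu> l) =
        real n * lam * (xq q l * (if l = z then 1 else 0)) - xq q l * \<mu> l" for l by (auto simp: algebra_simps)
    have "(\<Sum>l<n. xq q l * (real n * lam * (if z = l then 1 else 0) - \<mu> l)) = real n * lam * W - (\<Sum>l<n. xq q l * \<mu> l)"
      unfolding e W_def by (simp only: sum_subtractf sum_distrib_left[symmetric])
    then show ?thesis by (simp add: algebra_simps)
  qed
  finally show ?thesis .
qed

end



context qsys begin

primrec fe :: "nat list \<Rightarrow> nat \<Rightarrow> nat \<Rightarrow> nat list \<Rightarrow> real" where
  "fe ph j 0 q = V q"
| "fe ph j (Suc k) q = EA (\<lambda>a. ES (\<lambda>s. fe ph (Suc j) k (queue_update n q (ph ! j) a s)))"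

lemma fe_nonneg: "fe ph j k q \<ge> 0"
proof (induction k arbitrary: j q)
  case 0 then show ?case by (simp add: V_nonneg)
next
  case (Suc k) then show ?case by (simp add: integral_nonneg_AE)
qed

definition lin :: "nat list \<Rightarrow> nat \<Rightarrow> nat \<Rightarrow> nat list \<Rightarrow> real" where
  "lin ph j k q = (\<Sum>i<k. \<Sum>l<n. xq q l * (real n * lam * (if ph ! (j + i) = l then 1 else 0) - \<mu> l))"

definition K2 :: real where "K2 = (\<Sum>l<n. (Bd / \<gamma> l) * (real n * lam + \<bar>\<mu> l\<bar>))"

lemma K2_nonneg: "K2 \<ge> 0"
  unfolding K2_def using gamma_pos Bd_nonneg lam_nonneg
  by (intro sum_nonneg) auto

lemma K1_nonneg: "K1 \<ge> 0"
  unfolding K1_def using gamma_pos by (intro sum_nonneg) auto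

lemma q_shift:
  assumes l: "l < n" and a: "a \<in> set_pmf pA" and s: "s \<in> set_pmf pS"
  shows "\<bar>real (queue_update n q z a s ! l) - real (q ! l)\<bar> \<le> Bd"
proof -
  define d where "d = (if l = z then real a else 0) - real (s ! l)"
  have dB: "\<bar>d\<bar> \<le> Bd" using a_le[OF a] s_le[OF s l] by (auto simp: d_def)
  show ?thesis unfolding qu_real[OF l] d_def[symmetric] using dB by (auto simp: max_def)
qed

lemma lin_shift:
  assumes a: "a \<in> set_pmf pA" and s: "s \<in> set_pmf pS"
  shows "lin ph j k (queue_update n q z a s) \<le> lin ph j k q + real k * K2"
proof -
  let ?q1 = "queue_update n q z a s"
  have pt: "xq ?q1 l * c \<le> xq q l * c + (Bd / \<gamma> l) * (real n * lam + \<bar>\<mu> l\<bar>)"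
    if l: "l < n" and c: "\<bar>c\<bar> \<le> real n * lam + \<bar>\<mu> l\<bar>" for l c
  proof -
    have g: "\<gamma> l > 0" using gamma_pos l by auto
    have "\<bar>xq ?q1 l - xq q l\<bar> = \<bar>real (?q1 ! l) - real (q ! l)\<bar> / \<gamma> l"
      using g by (simp add: xq_def diff_divide_distrib[symmetric])
    also have "\<dots> \<le> Bd / \<gamma> l" using q_shift[OF l a s] g by (simp add: divide_right_mono)
    finally have xd: "\<bar>xq ?q1 l - xq q l\<bar> \<le> Bd / \<gamma> l" .
    have "(xq ?q1 l - xq q l) * c \<le> \<bar>xq ?q1 l - xq q l\<bar> * \<bar>c\<bar>" by (metis abs_ge_self abs_mult)
    also have "\<dots> \<le> (Bd / \<gamma> l) * (real n * lam + \<bar>\<mu> l\<bar>)"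
      using xd c by (intro mult_mono) auto
    finally show ?thesis by (simp add: algebra_simps)
  qed
  have cb: "\<bar>real n * lam * (if b then 1 else 0) - \<mu> l\<bar> \<le> real n * lam + \<bar>\<mu> l\<bar>" for b l
  proof -
    have "real n * lam \<ge> 0" using lam_nonneg by simp
    moreover have "\<mu> l \<le> \<bar>\<mu> l\<bar>" "- \<mu> l \<le> \<bar>\<mu> l\<bar>" by auto
    ultimately show ?thesis by (cases b) (simp_all add: abs_le_iff mult.commute)
  qed
  have "lin ph j k ?q1 \<le> (\<Sum>i<k. \<Sum>l<n. xq q l * (real n * lam * (if ph ! (j + i) = l then 1 else 0) - \<mu> l)
        + (Bd / \<gamma> l) * (real n * lam + \<bar>\<mu> l\<bar>))"
    unfolding lin_def by (intro sum_mono pt cb) auto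
  also have "\<dots> = lin ph j k q + real k * K2"
    by (simp add: lin_def K2_def sum.distrib)
  finally show ?thesis .
qed

lemma lin_Suc: "lin ph j (Suc k) q =
    (\<Sum>l<n. xq q l * (real n * lam * (if ph ! j = l then 1 else 0) - \<mu> l)) + lin ph (Suc j) k q"
  unfolding lin_def by (subst sum.lessThan_Suc_shift) simp

lemma fe_bound: "fe ph j k q \<le> V q + 2 * lin ph j k q + real k * K1 + 2 * real k ^ 2 * K2"
proof (induction k arbitrary: j q)
  case 0 then show ?case by (simp add: lin_def)
next
  case (Suc k)
  define cst where "cst = 2 * lin ph (Suc j) k q + 2 * real k * K2 + real k * K1 + 2 * real k ^ 2 * K2"
  have "fe ph j (Suc k) q \<le> EA (\<lambda>a. ES (\<lambda>s. V (queue_update n q (ph ! j) a s) + cst))"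
  proof (simp only: fe.simps, intro EA_mono ES_mono)
    fix a s assume a: "a \<in> set_pmf pA" and s: "s \<in> set_pmf pS"
    have "fe ph (Suc j) k (queue_update n q (ph ! j) a s) \<le> V (queue_update n q (ph ! j) a s)
         + 2 * lin ph (Suc j) k (queue_update n q (ph ! j) a s) + real k * K1 + 2 * real k ^ 2 * K2"
      by (rule Suc.IH)
    also have "\<dots> \<le> V (queue_update n q (ph ! j) a s) + cst"
      using lin_shift[OF a s, of ph "Suc j" k q "ph ! j"] by (simp add: cst_def)
    finally show "fe ph (Suc j) k (queue_update n q (ph ! j) a s) \<le> V (queue_update n q (ph ! j) a s) + cst" .
  qed
  also have "\<dots> = EA (\<lambda>a. ES (\<lambda>s. V (queue_update n q (ph ! j) a s))) + cst"
    by simp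
  also have "\<dots> \<le> V q + 2 * (\<Sum>l<n. xq q l * (real n * lam * (if ph ! j = l then 1 else 0) - \<mu> l)) + K1 + cst"
    using os_exp by simp
  also have "\<dots> \<le> V q + 2 * lin ph j (Suc k) q + real (Suc k) * K1 + 2 * real (Suc k) ^ 2 * K2"
    unfolding lin_Suc cst_def using K2_nonneg by (simp add: algebra_simps power2_eq_square)
  finally show ?case .
qed

end



lemma abel_aux:
  fixes x d :: "nat \<Rightarrow> real"
  assumes dec: "\<And>i j. i \<le> j \<Longrightarrow> j < N \<Longrightarrow> x j \<le> x i"
    and D: "\<And>m. 1 \<le> m \<Longrightarrow> m \<le> N \<Longrightarrow> (\<Sum>l<m. d l) \<le> - \<delta>"
  shows "1 \<le> M \<Longrightarrow> M \<le> N \<Longrightarrow> (\<Sum>l<M. x l * d l) \<le> x (M - 1) * (\<Sum>l<M. d l) - \<delta> * (x 0 - x (M - 1))"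
proof (induction M)
  case 0 then show ?case by simp
next
  case (Suc M)
  show ?case
  proof (cases "M = 0")
    case True then show ?thesis by simp
  next
    case False
    then have IH: "(\<Sum>l<M. x l * d l) \<le> x (M - 1) * (\<Sum>l<M. d l) - \<delta> * (x 0 - x (M - 1))"
      using Suc by simp
    have dm: "x M \<le> x (M - 1)" using dec[of "M - 1" M] Suc.prems by simp
    have DM: "(\<Sum>l<M. d l) \<le> - \<delta>" using D[of M] False Suc.prems by simp
    have "(\<Sum>l<Suc M. x l * d l) = (\<Sum>l<M. x l * d l) + x M * d M" by simp
    also have "\<dots> \<le> x (M - 1) * (\<Sum>l<M. d l) - \<delta> * (x 0 - x (M - 1)) + x M * d M" using IH by simp
    also have "\<dots> = x M * (\<Sum>l<Suc M. d l) + (x (M - 1) - x M) * (\<Sum>l<M. d l) - \<delta> * (x 0 - x (M - 1))"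
      by (simp add: algebra_simps)
    also have "(x (M - 1) - x M) * (\<Sum>l<M. d l) \<le> (x (M - 1) - x M) * (- \<delta>)"
      using dm DM by (intro mult_left_mono) auto
    finally show ?thesis by (simp add: algebra_simps)
  qed
qed

lemma abel:
  fixes x d :: "nat \<Rightarrow> real"
  assumes dec: "\<And>i j. i \<le> j \<Longrightarrow> j < N \<Longrightarrow> x j \<le> x i"
    and D: "\<And>m. 1 \<le> m \<Longrightarrow> m \<le> N \<Longrightarrow> (\<Sum>l<m. d l) \<le> - \<delta>"
    and pos: "x (N - 1) \<ge> 0" and N: "N \<ge> 1"
  shows "(\<Sum>l<N. x l * d l) \<le> - \<delta> * x 0"
proof -
  have "(\<Sum>l<N. x l * d l) \<le> x (N - 1) * (\<Sum>l<N. d l) - \<delta> * (x 0 - x (N - 1))"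
    by (rule abel_aux[OF dec D _ order_refl]) (use N in auto)
  also have "x (N - 1) * (\<Sum>l<N. d l) \<le> x (N - 1) * (- \<delta>)"
    using pos D[of N] N by (intro mult_left_mono) auto
  finally show ?thesis by (simp add: algebra_simps)
qed

context qsys begin

definition dset :: "real set" where
  "dset = (\<lambda>(\<eta>, m). (\<Sum>l<m. \<mu> (\<eta> l)) - real n * lam * (\<Sum>l<m. f_stat T Y \<mu> \<eta> l)) `
      ({\<eta>. \<eta> permutes {..<n}} \<times> {1..n})"

definition \<delta> :: real where "\<delta> = Min dset"

lemma dset_fin: "finite dset" and dset_ne: "dset \<noteq> {}"
proof -
  show "finite dset" unfolding dset_def
    by (intro finite_imageI finite_cartesian_product finite_permutations) auto
  have "(id, 1) \<in> {\<eta>. \<eta> permutes {..<n}} \<times> {1..n}" using n_pos by (auto intro: permutes_id)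
  then show "dset \<noteq> {}" unfolding dset_def by blast
qed

lemma delta_pos: "\<delta> > 0"
  unfolding \<delta>_def using dset_fin dset_ne stab
  by (subst Min_gr_iff) (auto simp: dset_def)

lemma delta_le: "\<eta> permutes {..<n} \<Longrightarrow> m \<in> {1..n} \<Longrightarrow>
   real n * lam * (\<Sum>l<m. f_stat T Y \<mu> \<eta> l) - (\<Sum>l<m. \<mu> (\<eta> l)) \<le> - \<delta>"
proof -
  assume "\<eta> permutes {..<n}" "m \<in> {1..n}"
  then have "(\<Sum>l<m. \<mu> (\<eta> l)) - real n * lam * (\<Sum>l<m. f_stat T Y \<mu> \<eta> l) \<in> dset"
    unfolding dset_def by force
  then have "\<delta> \<le> (\<Sum>l<m. \<mu> (\<eta> l)) - real n * lam * (\<Sum>l<m. f_stat T Y \<mu> \<eta> l)"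
    unfolding \<delta>_def using dset_fin by simp
  then show ?thesis by simp
qed

end



context qsys begin

definition Nc :: "nat list \<Rightarrow> nat \<Rightarrow> nat" where "Nc ph l = card {i. i < T \<and> ph ! i = l}"
definition H :: "nat list \<Rightarrow> nat list \<Rightarrow> real" where "H q ph = (\<Sum>l<n. xq q l * real (Nc ph l))"
definition Mq :: "nat list \<Rightarrow> real" where "Mq q = (\<Sum>l<n. xq q l)"

lemma Nc_le: "Nc ph l \<le> T"
proof -
  have "Nc ph l \<le> card {..<T}" unfolding Nc_def by (intro card_mono) auto
  then show ?thesis by simp
qed

lemma H_nonneg: "H q ph \<ge> 0"
  unfolding H_def using xq_nonneg by (intro sum_nonneg) auto

lemma unifm_fin: "finite_measure unifm"
  using unifm_prob by (simp add: prob_space_def)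

lemma int_Nc:
  assumes perm: "\<eta> permutes {..<n}"
  shows "integrable unifm (\<lambda>w. real (Nc (Y \<eta> \<mu> w) k))"
proof (rule finite_measure.integrable_const_bound[OF unifm_fin, where B="real T"])
  show "AE w in unifm. norm (real (Nc (Y \<eta> \<mu> w) k)) \<le> real T" using Nc_le by simp
  show "(\<lambda>w. real (Nc (Y \<eta> \<mu> w) k)) \<in> borel_measurable unifm"
    by (rule measurable_compose[OF Y_meas'[OF perm]]) simp
qed

lemma integral_Nc:
  assumes perm: "\<eta> permutes {..<n}"
  shows "(\<integral>w. real (Nc (Y \<eta> \<mu> w) (\<eta> l)) \<partial>unifm) = real T * f_stat T Y \<mu> \<eta> l"
proof -
  have T: "real T > 0" using T_pos by simp
  have "f_stat T Y \<mu> \<eta> l = (\<integral>w. real (Nc (Y \<eta> \<mu> w) (\<eta> l)) \<partial>unifm) / real T"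
    unfolding f_stat_def Nc_def by simp
  then show ?thesis using T by simp
qed

lemma FR1:
  assumes v: "v \<in> {0..1}"
  shows "real n * lam * (\<integral>w. H q (Y (L (xq q) v) \<mu> w) \<partial>unifm)
      \<le> real T * ((\<Sum>l<n. xq q l * \<mu> l) - \<delta> * Mq q / real n)"
proof -
  define \<eta> where "\<eta> = L (xq q) v"
  have perm: "\<eta> permutes {..<n}" and sorted: "\<And>i j. i \<le> j \<Longrightarrow> j < n \<Longrightarrow> xq q (\<eta> j) \<le> xq q (\<eta> i)"
    using L_sort v unfolding \<eta>_def by blast+
  define x where "x = (\<lambda>i. xq q (\<eta> i))"
  define d where "d = (\<lambda>i. real n * lam * f_stat T Y \<mu> \<eta> i - \<mu> (\<eta> i))"
  have "(\<integral>w. H q (Y \<eta> \<mu> w) \<partial>unifm) = (\<Sum>l<n. xq q l * (\<integral>w. real (Nc (Y \<eta> \<mu> w) l) \<partial>unifm))"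
    unfolding H_def using int_Nc[OF perm] by (simp add: integral_sum)
  also have "\<dots> = (\<Sum>l<n. xq q (\<eta> l) * (\<integral>w. real (Nc (Y \<eta> \<mu> w) (\<eta> l)) \<partial>unifm))"
    by (subst sum.permute[OF perm]) (simp add: comp_def)
  also have "\<dots> = (\<Sum>l<n. x l * (real T * f_stat T Y \<mu> \<eta> l))"
    using integral_Nc[OF perm] by (simp add: x_def)
  finally have I: "(\<integral>w. H q (Y \<eta> \<mu> w) \<partial>unifm) = (\<Sum>l<n. x l * (real T * f_stat T Y \<mu> \<eta> l))" .
  have "real n * lam * (\<Sum>l<n. x l * (real T * f_stat T Y \<mu> \<eta> l))
      = real T * ((\<Sum>l<n. x l * d l) + (\<Sum>l<n. x l * \<mu> (\<eta> l)))"
    by (simp add: d_def sum_distrib_left algebra_simps sum.distrib[symmetric])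
  also have "(\<Sum>l<n. x l * d l) \<le> - \<delta> * x 0"
  proof (rule abel)
    show "\<And>i j. i \<le> j \<Longrightarrow> j < n \<Longrightarrow> x j \<le> x i" using sorted by (simp add: x_def)
    show "(\<Sum>l<m. d l) \<le> - \<delta>" if "1 \<le> m" "m \<le> n" for m
    proof -
      have "(\<Sum>l<m. d l) = real n * lam * (\<Sum>l<m. f_stat T Y \<mu> \<eta> l) - (\<Sum>l<m. \<mu> (\<eta> l))"
        by (simp add: d_def sum_subtractf sum_distrib_left)
      also have "\<dots> \<le> - \<delta>" using delta_le[OF perm] that by simp
      finally show ?thesis .
    qed
    show "x (n - 1) \<ge> 0" unfolding x_def using permutes_in_image[OF perm, of "n - 1"] n_pos
      by (intro xq_nonneg) simp
    show "n \<ge> 1" by (rule n_pos)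
  qed
  also have "(\<Sum>l<n. x l * \<mu> (\<eta> l)) = (\<Sum>l<n. xq q l * \<mu> l)"
    unfolding x_def by (subst (2) sum.permute[OF perm]) (simp add: comp_def)
  also have "- \<delta> * x 0 \<le> - \<delta> * Mq q / real n"
  proof -
    have "Mq q = (\<Sum>l<n. x l)" unfolding Mq_def x_def by (subst sum.permute[OF perm]) (simp add: comp_def)
    also have "\<dots> \<le> (\<Sum>l<n. x 0)" using sorted by (intro sum_mono) (simp add: x_def)
    finally have "Mq q \<le> real n * x 0" by simp
    then have "Mq q / real n \<le> x 0" using n_pos by (simp add: divide_le_eq mult.commute)
    then have "\<delta> * (Mq q / real n) \<le> \<delta> * x 0" using delta_pos by (intro mult_left_mono) auto
    then show ?thesis by simp
  qed
  finally have X: "real n * lam * (\<Sum>l<n. x l * (real T * f_stat T Y \<mu> \<eta> l))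
      \<le> real T * ((\<Sum>l<n. xq q l * \<mu> l) - \<delta> * Mq q / real n)"
    using T_pos by (simp add: mult_left_mono)
  show ?thesis using X I unfolding \<eta>_def by simp
qed

end



context qsys begin

lemma sum_ind_Nc: "(\<Sum>i<T. (if ph ! i = l then 1 else 0 :: real)) = real (Nc ph l)"
proof -
  have "(\<Sum>i<T. (if ph ! i = l then 1 else 0 :: real)) = (\<Sum>i\<in>{i \<in> {..<T}. ph ! i = l}. 1)"
    by (subst sum.inter_filter) auto
  also have "{i \<in> {..<T}. ph ! i = l} = {i. i < T \<and> ph ! i = l}" by auto
  finally show ?thesis by (simp add: Nc_def)
qed

lemma lin_H: "lin ph 0 T q = real n * lam * H q ph - real T * (\<Sum>l<n. xq q l * \<mu> l)"
proof -
  have "lin ph 0 T q = (\<Sum>l<n. \<Sum>i<T. xq q l * (real n * lam * (if ph ! i = l then 1 else 0) - \<mu> l))"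
    unfolding lin_def by (subst sum.swap) simp
  also have "\<dots> = (\<Sum>l<n. xq q l * ((\<Sum>i<T. real n * lam * (if ph ! i = l then 1 else 0)) - real T * \<mu> l))"
    by (intro sum.cong refl) (simp add: sum_distrib_left[symmetric] sum_subtractf)
  also have "\<dots> = (\<Sum>l<n. real n * lam * (xq q l * real (Nc ph l)) - real T * (xq q l * \<mu> l))"
    by (simp add: sum_distrib_left[symmetric] sum_ind_Nc algebra_simps)
  also have "\<dots> = real n * lam * H q ph - real T * (\<Sum>l<n. xq q l * \<mu> l)"
    by (simp add: H_def sum_subtractf sum_distrib_left)
  finally show ?thesis .
qed

definition RH :: "nat list \<Rightarrow> real" where
  "RH q = real T * ((\<Sum>l<n. xq q l * \<mu> l) - \<delta> * Mq q / real n)"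

lemma int_H:
  assumes perm: "\<eta> permutes {..<n}"
  shows "integrable unifm (\<lambda>w. H q (Y \<eta> \<mu> w))"
  unfolding H_def by (rule Bochner_Integration.integrable_sum, rule integrable_mult_right, rule int_Nc[OF perm])

lemma RH_nonneg: "RH q \<ge> 0"
proof -
  have "0 \<le> real n * lam * (\<integral>w. H q (Y (L (xq q) 0) \<mu> w) \<partial>unifm)"
    using lam_nonneg H_nonneg by (intro mult_nonneg_nonneg integral_nonneg_AE) auto
  also have "\<dots> \<le> RH q" unfolding RH_def by (rule FR1) simp
  finally show ?thesis .
qed

lemma FR2: "real n * lam * measure_pmf.expectation (fdp q) (H q) \<le> RH q"
proof -
  let ?E = "measure_pmf.expectation (fdp q) (H q)"
  have int: "integrable (measure_pmf (fdp q)) (H q)"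
    by (rule integrable_measure_pmf_finite[OF finite_fdp])
  have "ennreal ?E = (\<integral>\<^sup>+ ph. ennreal (H q ph) \<partial>fdp q)"
    by (rule nn_integral_eq_integral[symmetric]) (use int H_nonneg in auto)
  also have "\<dots> = (\<integral>\<^sup>+ v. \<integral>\<^sup>+ w. ennreal (H q (Y (L (xq q) v) \<mu> w)) \<partial>unifm \<partial>unifm)"
    unfolding fdp_eq by (rule FD_nn)
  finally have E: "ennreal ?E = \<dots>" .
  have meas: "(\<lambda>v. \<integral>\<^sup>+ w. ennreal (H q (Y (L (xq q) v) \<mu> w)) \<partial>unifm) \<in> borel_measurable unifm"
  proof (rule measurable_compose[of "L (xq q)" unifm "count_space UNIV"])
    show "L (xq q) \<in> measurable unifm (count_space UNIV)"
      by (subst measurable_cong_sets[OF sets_unifm refl]) (use L_meas in blast)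
  qed simp
  have "ennreal (real n * lam * ?E) = ennreal (real n * lam) * ennreal ?E"
    by (rule ennreal_mult') (use lam_nonneg in simp)
  also have "\<dots> = (\<integral>\<^sup>+ v. ennreal (real n * lam) * \<integral>\<^sup>+ w. ennreal (H q (Y (L (xq q) v) \<mu> w)) \<partial>unifm \<partial>unifm)"
    unfolding E by (rule nn_integral_cmult[symmetric, OF meas])
  also have "\<dots> \<le> (\<integral>\<^sup>+ v. ennreal (RH q) \<partial>unifm)"
  proof (rule nn_integral_mono_AE)
    show "AE v in unifm. ennreal (real n * lam) * (\<integral>\<^sup>+ w. ennreal (H q (Y (L (xq q) v) \<mu> w)) \<partial>unifm) \<le> ennreal (RH q)"
      using AE_unifm
    proof eventually_elim
      case (elim v)
      have perm: "L (xq q) v permutes {..<n}" using L_sort elim by blast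
      have "(\<integral>\<^sup>+ w. ennreal (H q (Y (L (xq q) v) \<mu> w)) \<partial>unifm) = ennreal (\<integral>w. H q (Y (L (xq q) v) \<mu> w) \<partial>unifm)"
        by (rule nn_integral_eq_integral) (use int_H[OF perm] H_nonneg in auto)
      then have "ennreal (real n * lam) * (\<integral>\<^sup>+ w. ennreal (H q (Y (L (xq q) v) \<mu> w)) \<partial>unifm)
          = ennreal (real n * lam * (\<integral>w. H q (Y (L (xq q) v) \<mu> w) \<partial>unifm))"
        by (simp only: ennreal_mult'[symmetric] lam_nonneg of_nat_0_le_iff mult_nonneg_nonneg)
      also have "\<dots> \<le> ennreal (RH q)"
        using FR1[OF elim] unfolding RH_def by (rule ennreal_leI)
      finally show ?case .
    qed
  qed
  also have "\<dots> = ennreal (RH q)"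
    using prob_space.emeasure_space_1[OF unifm_prob] by simp
  finally show ?thesis using RH_nonneg by (simp add: ennreal_le_iff)
qed

lemma frame_drift:
  "measure_pmf.expectation (fdp q) (\<lambda>ph. fe ph 0 T q)
     \<le> V q - 2 * real T * \<delta> * Mq q / real n + real T * K1 + 2 * real T ^ 2 * K2"
proof -
  have int: "integrable (measure_pmf (fdp q)) (f :: nat list \<Rightarrow> real)" for f
    by (rule integrable_measure_pmf_finite[OF finite_fdp])
  have "measure_pmf.expectation (fdp q) (\<lambda>ph. fe ph 0 T q)
      \<le> measure_pmf.expectation (fdp q) (\<lambda>ph. V q + 2 * (real n * lam * H q ph - real T * (\<Sum>l<n. xq q l * \<mu> l))
            + real T * K1 + 2 * real T ^ 2 * K2)"
    by (intro integral_mono int) (use fe_bound[of _ 0 T q] lin_H in simp)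
  also have "\<dots> = V q + 2 * (real n * lam * measure_pmf.expectation (fdp q) (H q) - real T * (\<Sum>l<n. xq q l * \<mu> l))
            + real T * K1 + 2 * real T ^ 2 * K2"
    by (simp add: int integral_add integral_diff)
  also have "\<dots> \<le> V q + 2 * (RH q - real T * (\<Sum>l<n. xq q l * \<mu> l)) + real T * K1 + 2 * real T ^ 2 * K2"
    using FR2[of q] by simp
  also have "\<dots> = V q - 2 * real T * \<delta> * Mq q / real n + real T * K1 + 2 * real T ^ 2 * K2"
    by (simp add: RH_def algebra_simps)
  finally show ?thesis .
qed

end



context qsys begin

definition gq :: "qstate \<Rightarrow> real" where
  "gq x = (case x of (q, ph, j) \<Rightarrow> fe ph j (T - j) q + real (T - j))"

lemma gq_nonneg: "gq x \<ge> 0"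
  by (cases x) (auto simp: gq_def intro: add_nonneg_nonneg fe_nonneg)

definition K4 :: real where "K4 = (\<Sum>l<n. Bd / \<gamma> l)"

definition Rr :: real where
  "Rr = K4 + real n * (real T * K1 + 2 * real T ^ 2 * K2 + real T) / (2 * real T * \<delta>)"

definition Cset :: "qstate set" where
  "Cset = {x. valid_state n T x \<and> snd (snd x) = T - 1 \<and> Mq (fst x) < Rr}"

lemma Mq_shift:
  assumes a: "a \<in> set_pmf pA" and s: "s \<in> set_pmf pS"
  shows "Mq q - K4 \<le> Mq (queue_update n q z a s)"
proof -
  have "xq q l - Bd / \<gamma> l \<le> xq (queue_update n q z a s) l" if l: "l < n" for l
  proof -
    have g: "\<gamma> l > 0" using gamma_pos l by auto
    have "real (q ! l) - Bd \<le> real (queue_update n q z a s ! l)" using q_shift[OF l a s, of q z] by linarith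
    then have "(real (q ! l) - Bd) / \<gamma> l \<le> real (queue_update n q z a s ! l) / \<gamma> l"
      using g by (simp add: divide_right_mono)
    then show ?thesis by (simp add: xq_def diff_divide_distrib)
  qed
  then have "(\<Sum>l<n. xq q l - Bd / \<gamma> l) \<le> Mq (queue_update n q z a s)"
    unfolding Mq_def by (intro sum_mono) auto
  then show ?thesis by (simp add: Mq_def K4_def sum_subtractf)
qed

lemma valid_iff: "valid_state n T (q, ph, j) \<longleftrightarrow> length q = n \<and> ph \<in> Vph \<and> j < T"
  by (auto simp: valid_state_def Vph_def)

lemma closed: "valid_state n T x \<Longrightarrow> set_pmf (Pk x) \<subseteq> {x. valid_state n T x}"
proof -
  assume v: "valid_state n T x"
  obtain q ph j where x: "x = (q, ph, j)" by (cases x) auto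
  have "ph \<in> Vph" "j < T" using v x by (auto simp: valid_iff)
  then show ?thesis unfolding x Pk_def using T_pos
    by (auto simp: Let_def valid_iff split: if_splits intro: subsetD[OF set_fdp])
qed

lemma E_Pk_inner:
  fixes f :: "qstate \<Rightarrow> real"
  shows "measure_pmf.expectation (if Suc j < T then return_pmf (q1, ph, Suc j)
      else bind_pmf (fdp q1) (\<lambda>ph'. return_pmf (q1, ph', 0))) f
   = (if Suc j < T then f (q1, ph, Suc j) else measure_pmf.expectation (fdp q1) (\<lambda>ph'. f (q1, ph', 0)))"
  by (auto simp: E_bind finite_fdp)

lemma E_Pk:
  fixes f :: "qstate \<Rightarrow> real"
  shows "measure_pmf.expectation (Pk (q, ph, j)) f =
     EA (\<lambda>a. ES (\<lambda>s. if Suc j < T then f (queue_update n q (ph ! j) a s, ph, Suc j)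
         else measure_pmf.expectation (fdp (queue_update n q (ph ! j) a s)) (\<lambda>ph'. f (queue_update n q (ph ! j) a s, ph', 0))))"
proof -
  have fin1: "finite (set_pmf (bind_pmf pS g))" if "\<And>s. finite (set_pmf (g s))" for g :: "nat list \<Rightarrow> qstate pmf"
    using finite_pS that by simp
  have fin2: "finite (set_pmf (if Suc j < T then return_pmf (q1, ph, Suc j)
      else bind_pmf (fdp q1) (\<lambda>ph'. return_pmf (q1, ph', 0))))" for q1
    using finite_fdp by simp
  show ?thesis
    unfolding Pk_def Let_def
    by (simp only: prod.case E_bind[OF finite_pA fin1[OF fin2]] E_bind[OF finite_pS fin2] E_Pk_inner)
qed

end



context qsys begin

lemma drift:
  assumes v: "valid_state n T x" and nC: "x \<notin> Cset"
  shows "measure_pmf.expectation (Pk x) gq + 1 \<le> gq x"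
proof -
  obtain q ph j where x: "x = (q, ph, j)" by (cases x) auto
  have jT: "j < T" using v x by (simp add: valid_iff)
  show ?thesis
  proof (cases "Suc j < T")
    case True
    have "measure_pmf.expectation (Pk x) gq =
        EA (\<lambda>a. ES (\<lambda>s. fe ph (Suc j) (T - Suc j) (queue_update n q (ph ! j) a s) + real (T - Suc j)))"
      unfolding x E_Pk using True by (simp add: gq_def)
    also have "\<dots> = EA (\<lambda>a. ES (\<lambda>s. fe ph (Suc j) (T - Suc j) (queue_update n q (ph ! j) a s))) + real (T - Suc j)"
      by simp
    also have "EA (\<lambda>a. ES (\<lambda>s. fe ph (Suc j) (T - Suc j) (queue_update n q (ph ! j) a s))) = fe ph j (T - j) q"
    proof -
      have "T - j = Suc (T - Suc j)" using True by simp
      then show ?thesis by simp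
    qed
    finally show ?thesis unfolding x gq_def using True by simp
  next
    case False
    then have j: "j = T - 1" using jT by simp
    have Mq: "Mq q \<ge> Rr" using nC v x j by (auto simp: Cset_def)
    have gx: "gq x = EA (\<lambda>a. ES (\<lambda>s. V (queue_update n q (ph ! j) a s))) + 1"
    proof -
      have "T - j = Suc 0" using j T_pos by simp
      then show ?thesis unfolding x gq_def by simp
    qed
    have "measure_pmf.expectation (Pk x) gq =
        EA (\<lambda>a. ES (\<lambda>s. measure_pmf.expectation (fdp (queue_update n q (ph ! j) a s))
            (\<lambda>ph'. fe ph' 0 T (queue_update n q (ph ! j) a s) + real T)))"
      unfolding x E_Pk using False by (simp add: gq_def)
    also have "\<dots> \<le> EA (\<lambda>a. ES (\<lambda>s. V (queue_update n q (ph ! j) a s)))"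
    proof (intro EA_mono ES_mono)
      fix a s assume a: "a \<in> set_pmf pA" and s: "s \<in> set_pmf pS"
      let ?q1 = "queue_update n q (ph ! j) a s"
      have "measure_pmf.expectation (fdp ?q1) (\<lambda>ph'. fe ph' 0 T ?q1 + real T)
          = measure_pmf.expectation (fdp ?q1) (\<lambda>ph'. fe ph' 0 T ?q1) + real T"
        by (simp add: integrable_measure_pmf_finite[OF finite_fdp])
      also have "\<dots> \<le> V ?q1 - 2 * real T * \<delta> * Mq ?q1 / real n + real T * K1 + 2 * real T ^ 2 * K2 + real T"
        using frame_drift[of ?q1] by simp
      also have "\<dots> \<le> V ?q1"
      proof -
        define c where "c = real T * K1 + 2 * real T ^ 2 * K2 + real T"
        have Tp: "real T > 0" using T_pos by simp
        have np: "real n > 0" using n_pos by simp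
        have dp: "\<delta> > 0" by (rule delta_pos)
        have "Mq ?q1 \<ge> Mq q - K4" by (rule Mq_shift[OF a s])
        then have "Mq ?q1 \<ge> real n * c / (2 * real T * \<delta>)" using Mq unfolding Rr_def c_def by simp
        then have "Mq ?q1 * (2 * real T * \<delta>) \<ge> real n * c" using Tp dp by (simp add: pos_divide_le_eq)
        then have "2 * real T * \<delta> * Mq ?q1 / real n \<ge> c" using np by (simp add: le_divide_eq algebra_simps)
        then show ?thesis unfolding c_def by simp
      qed
      finally show "measure_pmf.expectation (fdp ?q1) (\<lambda>ph'. fe ph' 0 T ?q1 + real T) \<le> V ?q1" .
    qed
    finally show ?thesis using gx by simp
  qed
qed

lemma Rr_pos_if: "x \<in> Cset \<Longrightarrow> Rr > 0"
proof -
  assume "x \<in> Cset"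
  then have "Mq (fst x) < Rr" by (simp add: Cset_def)
  moreover have "Mq (fst x) \<ge> 0" unfolding Mq_def using xq_nonneg by (intro sum_nonneg) auto
  ultimately show ?thesis by simp
qed

lemma Cset_fin: "finite Cset"
proof -
  define G where "G = (\<Sum>l<n. \<gamma> l)"
  define B where "B = nat \<lceil>Rr * G\<rceil>"
  have sub: "Cset \<subseteq> (\<lambda>(q, ph). (q, ph, T - 1)) ` ({q. set q \<subseteq> {..B} \<and> length q = n} \<times> Vph)"
  proof
    fix x assume xC: "x \<in> Cset"
    obtain q ph j where x: "x = (q, ph, j)" by (cases x) auto
    have v: "length q = n" "ph \<in> Vph" "j = T - 1" "Mq q < Rr" using xC x by (auto simp: Cset_def valid_iff)
    have Rp: "Rr > 0" using Rr_pos_if[OF xC] .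
    have "q ! l \<le> B" if l: "l < n" for l
    proof -
      have g: "\<gamma> l > 0" using gamma_pos l by auto
      have "xq q l \<le> Mq q" unfolding Mq_def using xq_nonneg l
        by (intro member_le_sum) auto
      then have "real (q ! l) / \<gamma> l < Rr" using v(4) by (simp add: xq_def)
      then have "real (q ! l) < Rr * \<gamma> l" using g by (simp add: divide_less_eq)
      also have "\<gamma> l \<le> G" unfolding G_def using gamma_pos l by (intro member_le_sum) (auto intro: less_imp_le)
      then have "Rr * \<gamma> l \<le> Rr * G" using Rp by simp
      finally have "real (q ! l) \<le> Rr * G" by simp
      then show ?thesis unfolding B_def by linarith
    qed
    then have "set q \<subseteq> {..B}" using v(1) by (auto simp: in_set_conv_nth)
    then show "x \<in> (\<lambda>(q, ph). (q, ph, T - 1)) ` ({q. set q \<subseteq> {..B} \<and> length q = n} \<times> Vph)"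
      using v x by auto
  qed
  show ?thesis
    by (rule finite_subset[OF sub], intro finite_imageI finite_cartesian_product finite_Vph)
       (rule finite_lists_length_eq, simp)
qed

theorem main: "positive_recurrent (\<lambda>x. measure_pmf (Pk x)) {x. valid_state n T x}"
proof -
  let ?S = "{x. valid_state n T x}"
  let ?K = "\<lambda>x. measure_pmf (Pk x)"
  define g' where "g' = (\<lambda>x. if x \<in> Cset then 1 + (\<integral>\<^sup>+ y. ennreal (gq y) \<partial>Pk x) else ennreal (gq x))"
  have nnE: "(\<integral>\<^sup>+ y. ennreal (gq y) \<partial>Pk x) = ennreal (measure_pmf.expectation (Pk x) gq)" for x
    by (rule nn_integral_eq_integral) (auto simp: integrable_measure_pmf_finite[OF finite_Pk] gq_nonneg)
  have hit: "exp_hitting_time ?K Cset x \<le> g' x" if x: "x \<in> ?S" for x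
  proof (rule hit_le_super[where S="?S"])
    show "set_pmf (Pk x) \<subseteq> ?S" if "x \<in> ?S" for x using closed that by simp
    show "x \<in> ?S" by fact
    fix x assume xS: "x \<in> ?S"
    have le: "(\<integral>\<^sup>+ y. indicator (- Cset) y * g' y \<partial>Pk x) \<le> (\<integral>\<^sup>+ y. ennreal (gq y) \<partial>Pk x)"
      by (intro nn_integral_mono) (auto simp: g'_def indicator_def)
    show "1 + (\<integral>\<^sup>+ y. indicator (- Cset) y * g' y \<partial>Pk x) \<le> g' x"
    proof (cases "x \<in> Cset")
      case True then show ?thesis using le by (simp add: g'_def add_left_mono)
    next
      case False
      have "1 + (\<integral>\<^sup>+ y. indicator (- Cset) y * g' y \<partial>Pk x) \<le> 1 + ennreal (measure_pmf.expectation (Pk x) gq)"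
        using le nnE by (simp add: add_left_mono)
      also have "\<dots> = ennreal (measure_pmf.expectation (Pk x) gq + 1)"
        by (simp add: ennreal_plus integral_nonneg_AE gq_nonneg add.commute)
      also have "\<dots> \<le> ennreal (gq x)"
        using drift[of x] xS False by (intro ennreal_leI) simp
      finally show ?thesis using False by (simp add: g'_def)
    qed
  qed
  have fin: "\<forall>x\<in>?S. exp_hitting_time ?K Cset x < \<infinity>"
  proof
    fix x assume x: "x \<in> ?S"
    have "g' x < \<infinity>" by (simp add: g'_def nnE)
    then show "exp_hitting_time ?K Cset x < \<infinity>" using hit[OF x] by (rule le_less_trans[rotated])
  qed
  have "Cset \<subseteq> ?S" by (auto simp: Cset_def)
  from reach_PR[OF Cset_fin this fin] show ?thesis
    by (simp add: positive_recurrent_def)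
qed

end


theorem theorem1:
  fixes n T :: nat
    and lam sigma_lam Amax :: real and Smax :: nat
    and \<mu> \<sigma> \<gamma> :: "nat \<Rightarrow> real"
    and pA :: "nat pmf" and pS :: "nat list pmf"
    and L :: "(nat \<Rightarrow> real) \<Rightarrow> real \<Rightarrow> (nat \<Rightarrow> nat)"
    and Y :: "(nat \<Rightarrow> nat) \<Rightarrow> (nat \<Rightarrow> real) \<Rightarrow> real \<Rightarrow> nat list"
  assumes n_pos: "n \<ge> 1" and T_pos: "T \<ge> 1"
    and arr_mean: "measure_pmf.expectation pA real = real n * lam"
    and arr_var: "measure_pmf.variance pA real = real n * sigma_lam\<^sup>2"
    and arr_bd: "\<forall>a\<in>set_pmf pA. real a \<le> real n * Amax"
    and srv_len: "\<forall>s\<in>set_pmf pS. length s = n \<and> (\<forall>l<n. s ! l \<le> Smax)"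
    and srv_mean: "\<forall>l<n. measure_pmf.expectation pS (\<lambda>s. real (s ! l)) = \<mu> l"
    and srv_var: "\<forall>l<n. measure_pmf.variance pS (\<lambda>s. real (s ! l)) = (\<sigma> l)\<^sup>2"
    and mu_pos: "\<forall>l<n. \<mu> l > 0"
    and mu_sorted: "\<forall>l l'. l \<le> l' \<longrightarrow> l' < n \<longrightarrow> \<mu> l \<le> \<mu> l'"
    and gamma_pos: "\<forall>l<n. \<gamma> l > 0"
    and L_meas: "\<forall>x. L x \<in> measurable borel (count_space UNIV)"
    and L_sort: "\<forall>x v. v \<in> {0..1} \<longrightarrow> L x v permutes {..<n} \<and>
                   (\<forall>i j. i \<le> j \<longrightarrow> j < n \<longrightarrow> x (L x v i) \<ge> x (L x v j))"
    and Y_meas: "\<forall>\<eta>. \<eta> permutes {..<n} \<longrightarrow> Y \<eta> \<mu> \<in> measurable borel (count_space UNIV)"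
    and Y_range: "\<forall>\<eta> w. \<eta> permutes {..<n} \<longrightarrow> w \<in> {0..1} \<longrightarrow>
                   length (Y \<eta> \<mu> w) = T \<and> (\<forall>i\<in>set (Y \<eta> \<mu> w). i < n)"
    and stab: "\<forall>\<eta>. \<eta> permutes {..<n} \<longrightarrow> (\<forall>m\<in>{1..n}.
                 real n * lam * (\<Sum>l<m. f_stat T Y \<mu> \<eta> l) < (\<Sum>l<m. \<mu> (\<eta> l)))"
  shows "positive_recurrent (dispatch_kernel n T \<gamma> \<mu> L Y pA pS) {x. valid_state n T x}"
  proof -
  interpret qsys n T lam Amax Smax \<mu> \<gamma> pA pS L Y
    by unfold_locales (fact n_pos T_pos arr_mean arr_bd srv_len srv_mean gamma_pos L_meas L_sort Y_meas Y_range stab)+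
  show ?thesis using main by (simp add: K_eq)
qed

end
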